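(* Let $\sigma$ be a strongly erasing $k$-block substitution with $w_\epsilon\ne1^k$ that satisfies the optimality condition. Let $(w^{(n)})_{n\in\mathbb N_0}$ be any sequence of finite binary words. Then there exist $x\in[w^{(0)}]$ and positive integers $h_1,h_2,\dots$ such that $f_\sigma^{h_n}(x)\in[w^{(n)}]$ for every $n\in\mathbb N$.
   Context: Notation: $\mathbb I=[0,1]$. $\{0,1\}^*$ and $\{0,1\}^\omega$ denote finite and infinite binary words, and $\epsilon$ is the empty word. For a word $w$, set $0.w=\sum_iw_i2^{-i}$. For $x\in(0,1]$, $\widetilde x$ is the unique infinite binary expansion of $x$ not ending in $0^\infty$. For $w\in\{0,1\}^*$, the cylinder is $[w]=\{x\in\mathbb I: x=0.wv\text{ for some finite or infinite word } v\}$. Fix $k\ge2$. An erasing $k$-block substitution is a map $\sigma:\{0,1\}^k\to\{0,1\}^*$ with exactly one block $w_\epsilon$ such that $\sigma(w_\epsilon)=\epsilon$. It acts blockwise on infinite words and on finite words of length a multiple of $k$. $k$-rounding: a $k$-rounding of $w$ is any word $wv$ whose length is the least multiple of $k$ that is $\ge|w|$; if $|w|$ is a multiple of $k$, the only $k$-rounding of $w$ is $w$. $\sigma$ is strongly erasing if for every $w\in\{0,1\}^*$ there exist $n\in\mathbb N$ and words $r_0,\dots,r_{n-1}$ such that $r_0$ is a $k$-rounding of $w$, $r_j$ is a $k$-rounding of $\sigma(r_{j-1})$ for $1\le j\le n-1$, and $\sigma(r_{n-1})=\epsilon$. The map $f_\sigma:\mathbb I\to\mathbb I$ is defined by $f_\sigma(x)=0.\sigma(\widetilde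 x)$ if $x\in(0,1]$ and $\widetilde x\neq w_\epsilon^\infty$, and $f_\sigma(x)=0$ otherwise. Optimality condition: every $w\in\{0,1\}^\omega$ can be written as $w=\prod_{i\ge1}\sigma(b_i)$ with blocks $b_i\in\{0,1\}^k$ satisfying $\sigma(b_i)\ne\epsilon$. *)

theory Defs
  imports Complex_Main
begin

text \<open>Binary words: True = 1, False = 0. Finite words are bool lists, infinite words
  are functions nat \<Rightarrow> bool (position 0 is the first letter w_1).\<close>

definition val_fin :: "bool list \<Rightarrow> real" where
  "val_fin w = (\<Sum>i<length w. (if w ! i then 1 else 0) / 2 ^ (i + 1))"

definition val_inf :: "(nat \<Rightarrow> bool) \<Rightarrow> real" where
  "val_inf s = (\<Sum>i. (if s i then 1 else 0) / 2 ^ (i + 1))"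

definition bexp :: "real \<Rightarrow> (nat \<Rightarrow> bool)" where
  "bexp x = (THE s. val_inf s = x \<and> (\<forall>n. \<exists>m\<ge>n. s m))"

definition cyl :: "bool list \<Rightarrow> real set" where
  "cyl w = {x. 0 \<le> x \<and> x \<le> 1 \<and>
     ((\<exists>v::bool list. x = val_fin (w @ v)) \<or>
      (\<exists>v::nat \<Rightarrow> bool. x = val_inf (\<lambda>i. if i < length w then w ! i else v (i - length w))))}"

definition block :: "nat \<Rightarrow> (nat \<Rightarrow> bool) \<Rightarrow> nat \<Rightarrow> bool list" where
  "block k s j = map s [j * k..<j * k + k]"

definition sigma_fin :: "nat \<Rightarrow> (bool list \<Rightarrow> bool list) \<Rightarrow> bool list \<Rightarrow> bool list" where
  "sigma_fin k \<sigma> w = concat (map (\<lambda>j. \<sigma> (take k (drop (j * k) w))) [0..<length w div k])"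

definition offs :: "(nat \<Rightarrow> bool list) \<Rightarrow> nat \<Rightarrow> nat" where
  "offs u j = (\<Sum>i<j. length (u i))"

text \<open>Value 0.(u_0 u_1 u_2 ...) of an infinite concatenation of finite words
  (which may itself be a finite or infinite word).\<close>
definition val_concat :: "(nat \<Rightarrow> bool list) \<Rightarrow> real" where
  "val_concat u = (\<Sum>j. val_fin (u j) / 2 ^ offs u j)"

text \<open>The infinite word s equals the product u_0 u_1 u_2 ...
  (used only with all u_j nonempty, so every position is covered).\<close>
definition is_concat :: "(nat \<Rightarrow> bool) \<Rightarrow> (nat \<Rightarrow> bool list) \<Rightarrow> bool" where
  "is_concat s u \<longleftrightarrow> (\<forall>j i. i < length (u j) \<longrightarrow> s (offs u j + i) = u j ! i)"

definition erasing_subst :: "nat \<Rightarrow> (bool list \<Rightarrow> bool list) \<Rightarrow> bool list \<Rightarrow> bool" where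
  "erasing_subst k \<sigma> we \<longleftrightarrow> length we = k \<and> \<sigma> we = [] \<and>
     (\<forall>b. length b = k \<and> \<sigma> b = [] \<longrightarrow> b = we)"

definition k_rounding :: "nat \<Rightarrow> bool list \<Rightarrow> bool list \<Rightarrow> bool" where
  "k_rounding k w r \<longleftrightarrow> (\<exists>v. r = w @ v) \<and> k dvd length r \<and> length w \<le> length r \<and>
     (\<forall>m. k dvd m \<and> length w \<le> m \<longrightarrow> length r \<le> m)"

definition strongly_erasing :: "nat \<Rightarrow> (bool list \<Rightarrow> bool list) \<Rightarrow> bool" where
  "strongly_erasing k \<sigma> \<longleftrightarrow> (\<forall>w. \<exists>rs. rs \<noteq> [] \<and> k_rounding k w (rs ! 0) \<and>
     (\<forall>j. 1 \<le> j \<and> j < length rs \<longrightarrow> k_rounding k (sigma_fin k \<sigma> (rs ! (j - 1))) (rs ! j)) \<and>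
     sigma_fin k \<sigma> (last rs) = [])"

definition f_sigma :: "nat \<Rightarrow> (bool list \<Rightarrow> bool list) \<Rightarrow> bool list \<Rightarrow> real \<Rightarrow> real" where
  "f_sigma k \<sigma> we x =
     (if 0 < x \<and> x \<le> 1 \<and> bexp x \<noteq> (\<lambda>i. we ! (i mod k))
      then val_concat (\<lambda>j. \<sigma> (block k (bexp x) j)) else 0)"

definition optimal :: "nat \<Rightarrow> (bool list \<Rightarrow> bool list) \<Rightarrow> bool" where
  "optimal k \<sigma> \<longleftrightarrow> (\<forall>s::nat \<Rightarrow> bool. \<exists>b::nat \<Rightarrow> bool list.
     (\<forall>i. length (b i) = k \<and> \<sigma> (b i) \<noteq> []) \<and> is_concat s (\<lambda>i. \<sigma> (b i)))"

end

theory Submission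
  imports Defs "HOL-Library.Sublist"
begin

definition app :: "bool list \<Rightarrow> (nat \<Rightarrow> bool) \<Rightarrow> nat \<Rightarrow> bool" where
  "app w z = (\<lambda>i. if i < length w then w ! i else z (i - length w))"
definition pre :: "bool list \<Rightarrow> (nat \<Rightarrow> bool) \<Rightarrow> bool" where
  "pre w t \<longleftrightarrow> (\<forall>i<length w. t i = w ! i)"
definition pf :: "(nat \<Rightarrow> bool) \<Rightarrow> nat \<Rightarrow> bool list" where
  "pf t l = map t [0..<l]"
definition cc :: "(nat \<Rightarrow> bool list) \<Rightarrow> nat \<Rightarrow> bool" where
  "cc u i = (let j = LEAST j. i < offs u (Suc j) in u j ! (i - offs u j))"
definition ub :: "(nat \<Rightarrow> bool list) \<Rightarrow> bool" where
  "ub u \<longleftrightarrow> (\<forall>q. \<exists>j. q \<le> offs u j)"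

lemma offs_0[simp]: "offs u 0 = 0" by (simp add: offs_def)
lemma offs_Suc: "offs u (Suc j) = offs u j + length (u j)" by (simp add: offs_def)
lemma offs_mono: "j \<le> j' \<Longrightarrow> offs u j \<le> offs u j'"
  by (induction j' rule: dec_induct) (auto simp: offs_Suc)

lemma cc_is_concat: "is_concat (cc u) u"
  unfolding is_concat_def
proof (intro allI impI)
  fix j i assume i: "i < length (u j)"
  have "(LEAST j'. offs u j + i < offs u (Suc j')) = j"
  proof (rule Least_equality)
    show "offs u j + i < offs u (Suc j)" using i by (simp add: offs_Suc)
    fix y assume y: "offs u j + i < offs u (Suc y)"
    show "j \<le> y"
    proof (rule ccontr)
      assume "\<not> j \<le> y" hence "Suc y \<le> j" by simp
      hence "offs u (Suc y) \<le> offs u j" by (rule offs_mono)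
      thus False using y by simp
    qed
  qed
  thus "cc u (offs u j + i) = u j ! i" by (simp add: cc_def)
qed

lemma cover_bounded: "i < offs u N \<Longrightarrow> \<exists>j<N. \<exists>i'<length (u j). i = offs u j + i'"
proof (induction N)
  case 0 thus ?case by simp
next
  case (Suc N)
  show ?case
  proof (cases "i < offs u N")
    case True thus ?thesis using Suc.IH by (meson less_Suc_eq)
  next
    case False
    hence "i - offs u N < length (u N)" "i = offs u N + (i - offs u N)" using Suc.prems by (auto simp: offs_Suc)
    thus ?thesis by blast
  qed
qed

lemma is_concat_unique: "ub u \<Longrightarrow> is_concat s u \<Longrightarrow> is_concat s' u \<Longrightarrow> s = s'"
proof
  fix x assume "ub u" "is_concat s u" "is_concat s' u"
  then obtain N where "Suc x \<le> offs u N" unfolding ub_def by blast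
  then obtain j i where "i < length (u j)" "x = offs u j + i" using cover_bounded[of x u N] by auto
  thus "s x = s' x" using \<open>is_concat s u\<close> \<open>is_concat s' u\<close> unfolding is_concat_def by simp
qed

lemma length_concat_offs: "length (concat (map u [0..<N])) = offs u N"
  by (induction N) (auto simp: offs_Suc)

lemma concat_nth: "j < N \<Longrightarrow> i < length (u j) \<Longrightarrow> concat (map u [0..<N]) ! (offs u j + i) = u j ! i"
proof (induction N)
  case 0 thus ?case by simp
next
  case (Suc N)
  show ?case
  proof (cases "j < N")
    case True
    have "offs u j + i < offs u N"
    proof -
      have "offs u (Suc j) \<le> offs u N" using True by (intro offs_mono) simp
      thus ?thesis using Suc.prems by (simp add: offs_Suc)
    qed
    thus ?thesis using True Suc by (simp add: nth_append length_concat_offs)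
  next
    case False hence "j = N" using Suc by simp
    thus ?thesis using Suc.prems by (simp add: nth_append length_concat_offs)
  qed
qed

lemma pre_concat_cc: "pre (concat (map u [0..<N])) (cc u)"
  unfolding pre_def length_concat_offs
proof (intro allI impI)
  fix x assume "x < offs u N"
  then obtain j i where "j < N" "i < length (u j)" "x = offs u j + i" using cover_bounded by blast
  thus "cc u x = concat (map u [0..<N]) ! x"
    using concat_nth cc_is_concat unfolding is_concat_def by metis
qed


definition U :: "nat \<Rightarrow> (bool list \<Rightarrow> bool list) \<Rightarrow> (nat \<Rightarrow> bool) \<Rightarrow> nat \<Rightarrow> bool list" where
  "U k \<sigma> t j = \<sigma> (block k t j)"
definition S :: "nat \<Rightarrow> (bool list \<Rightarrow> bool list) \<Rightarrow> (nat \<Rightarrow> bool) \<Rightarrow> nat \<Rightarrow> bool" where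
  "S k \<sigma> t = cc (U k \<sigma> t)"

lemma length_block[simp]: "length (block k t j) = k" by (simp add: block_def)
lemma block_nth: "r < k \<Longrightarrow> block k t j ! r = t (j * k + r)" by (simp add: block_def)

lemma block_pf: "(Suc j) * k \<le> l \<Longrightarrow> take k (drop (j * k) (pf t l)) = block k t j"
  unfolding pf_def block_def
  by (simp add: take_map drop_map add.commute)

lemma take_drop_prefix: "(Suc j) * k \<le> length p \<Longrightarrow> take k (drop (j * k) (p @ c)) = take k (drop (j * k) p)"
  by simp

lemma sigma_fin_pf: "0 < k \<Longrightarrow> sigma_fin k \<sigma> (pf t l) = concat (map (U k \<sigma> t) [0..<l div k])"
  unfolding sigma_fin_def
proof -
  assume k: "0 < k"
  have "map (\<lambda>j. \<sigma> (take k (drop (j * k) (pf t l)))) [0..<length (pf t l) div k]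
      = map (U k \<sigma> t) [0..<l div k]"
  proof (rule map_cong)
    show "[0..<length (pf t l) div k] = [0..<l div k]" by (simp add: pf_def)
    fix j assume "j \<in> set [0..<l div k]"
    hence "Suc j * k \<le> l" using k
      by (metis atLeastLessThan_iff div_times_less_eq_dividend le_trans less_eq_Suc_le mult_le_mono1 set_upt mult.commute)
    thus "\<sigma> (take k (drop (j * k) (pf t l))) = U k \<sigma> t j" by (simp add: block_pf U_def)
  qed
  thus "concat (map (\<lambda>j. \<sigma> (take k (drop (j * k) (pf t l)))) [0..<length (pf t l) div k]) =
    concat (map (U k \<sigma> t) [0..<l div k])" by simp
qed

lemma length_pf[simp]: "length (pf t l) = l" by (simp add: pf_def)

lemma pre_pf: "pre (pf t l) t" by (simp add: pre_def pf_def)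

lemma pre_eq_pf: "pre q t \<Longrightarrow> q = pf t (length q)"
  by (simp add: pre_def pf_def nth_equalityI)

lemma pre_sigma_fin_pf: "0 < k \<Longrightarrow> pre (sigma_fin k \<sigma> (pf t l)) (S k \<sigma> t)"
  by (simp add: sigma_fin_pf S_def pre_concat_cc)

lemma length_sigma_fin_pf: "0 < k \<Longrightarrow> length (sigma_fin k \<sigma> (pf t l)) = offs (U k \<sigma> t) (l div k)"
  by (simp add: sigma_fin_pf length_concat_offs)

lemma pre_levels: "0 < k \<Longrightarrow> pre ((sigma_fin k \<sigma> ^^ m) (pf t l)) ((S k \<sigma> ^^ m) t)"
proof (induction m)
  case 0 thus ?case by (simp add: pre_pf)
next
  case (Suc m)
  let ?q = "(sigma_fin k \<sigma> ^^ m) (pf t l)"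
  have "?q = pf ((S k \<sigma> ^^ m) t) (length ?q)" using Suc by (simp add: pre_eq_pf)
  hence "sigma_fin k \<sigma> ?q = sigma_fin k \<sigma> (pf ((S k \<sigma> ^^ m) t) (length ?q))" by simp
  thus ?case using pre_sigma_fin_pf[OF Suc.prems] by simp
qed

lemma sigma_fin_mono: "prefix p q \<Longrightarrow> prefix (sigma_fin k \<sigma> p) (sigma_fin k \<sigma> q)"
proof -
  assume "prefix p q"
  then obtain c where q: "q = p @ c" by (auto simp: prefix_def)
  have le: "length p div k \<le> length q div k" using q by (simp add: div_le_mono)
  have sp: "[0..<length q div k] = [0..<length p div k] @ [length p div k..<length q div k]"
    using le by (metis le0 upt_add_eq_append le_add_diff_inverse)
  have eq: "map (\<lambda>j. \<sigma> (take k (drop (j * k) q))) [0..<length p div k]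
          = map (\<lambda>j. \<sigma> (take k (drop (j * k) p))) [0..<length p div k]"
  proof (rule map_cong[OF refl])
    fix j assume "j \<in> set [0..<length p div k]"
    hence "j < length p div k" by simp
    hence "Suc j * k \<le> length p"
      by (metis div_times_less_eq_dividend le_trans less_eq_Suc_le mult_le_mono1 mult.commute)
    thus "\<sigma> (take k (drop (j * k) q)) = \<sigma> (take k (drop (j * k) p))" using q by simp
  qed
  show ?thesis unfolding sigma_fin_def sp map_append concat_append eq prefix_def by blast
qed

lemma funpow_mono_prefix: "prefix p q \<Longrightarrow> prefix ((sigma_fin k \<sigma> ^^ m) p) ((sigma_fin k \<sigma> ^^ m) q)"
  by (induction m) (auto intro: sigma_fin_mono)

lemma pf_prefix: "l \<le> l' \<Longrightarrow> prefix (pf t l) (pf t l')"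
  unfolding pf_def prefix_def
  by (metis le_add_diff_inverse map_append upt_add_eq_append zero_le)


definition goodb :: "nat \<Rightarrow> bool list \<Rightarrow> (nat \<Rightarrow> bool) \<Rightarrow> bool" where
  "goodb k we t \<longleftrightarrow> (\<forall>n. \<exists>j\<ge>n. block k t j \<noteq> we)"

lemma erasing_nonempty: "erasing_subst k \<sigma> we \<Longrightarrow> block k t j \<noteq> we \<Longrightarrow> \<sigma> (block k t j) \<noteq> []"
  unfolding erasing_subst_def by auto

lemma goodb_ub: assumes "erasing_subst k \<sigma> we" "goodb k we t" shows "ub (U k \<sigma> t)"
  unfolding ub_def
proof
  fix q show "\<exists>j. q \<le> offs (U k \<sigma> t) j"
  proof (induction q)
    case 0 thus ?case by auto
  next
    case (Suc q)
    then obtain j where j: "q \<le> offs (U k \<sigma> t) j" by blast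
    obtain j' where j': "j' \<ge> j" "block k t j' \<noteq> we" using assms(2) unfolding goodb_def by blast
    have "U k \<sigma> t j' \<noteq> []" using erasing_nonempty[OF assms(1) j'(2)] by (simp add: U_def)
    hence "offs (U k \<sigma> t) (Suc j') \<ge> Suc (offs (U k \<sigma> t) j')" by (simp add: offs_Suc Suc_le_eq)
    moreover have "offs (U k \<sigma> t) j' \<ge> offs (U k \<sigma> t) j" using j' offs_mono by blast
    ultimately show ?case using j by (meson Suc_le_mono le_trans)
  qed
qed

lemma app_append: "app (a @ b) z = app a (app b z)"
  by (auto simp: app_def nth_append fun_eq_iff)

lemma app_Nil[simp]: "app [] z = z" by (simp add: app_def)

lemma block_app_high:
  assumes k: "0 < k" and d: "k dvd length r"
  shows "block k (app r z) (length r div k + j) = block k z j"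
proof (rule nth_equalityI)
  show "length (block k (app r z) (length r div k + j)) = length (block k z j)" by simp
  fix i assume "i < length (block k (app r z) (length r div k + j))"
  hence i: "i < k" by simp
  have e: "(length r div k + j) * k + i = length r + (j * k + i)" using d k by (auto simp: algebra_simps elim!: dvdE)
  show "block k (app r z) (length r div k + j) ! i = block k z j ! i"
    using i by (simp add: block_nth e app_def)
qed

lemma block_app_low:
  assumes k: "0 < k" and d: "k dvd length r" and j: "j < length r div k"
  shows "block k (app r z) j = take k (drop (j * k) r)"
proof (rule nth_equalityI)
  have "Suc j * k \<le> length r" using j d k
    by (metis div_times_less_eq_dividend le_trans less_eq_Suc_le mult_le_mono1 mult.commute)
  thus "length (block k (app r z) j) = length (take k (drop (j * k) r))" by simp
  fix i assume "i < length (block k (app r z) j)"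
  hence i: "i < k" by simp
  have "j * k + i < length r" using \<open>Suc j * k \<le> length r\<close> i by simp
  thus "block k (app r z) j ! i = take k (drop (j * k) r) ! i"
    using i by (simp add: block_nth app_def add.commute)
qed

lemma sigma_fin_app:
  assumes k: "0 < k" and d: "k dvd length r"
  shows "sigma_fin k \<sigma> r = concat (map (U k \<sigma> (app r z)) [0..<length r div k])"
  unfolding sigma_fin_def
  by (rule arg_cong[where f=concat], rule map_cong[OF refl]) (simp add: U_def block_app_low[OF k d])

lemma offs_shift: "offs u (R + j) = offs u R + offs (\<lambda>j. u (R + j)) j"
  by (induction j) (simp_all add: offs_Suc)

lemma S_app:
  assumes k: "0 < k" and d: "k dvd length r" and es: "erasing_subst k \<sigma> we" and g: "goodb k we z"
  shows "S k \<sigma> (app r z) = app (sigma_fin k \<sigma> r) (S k \<sigma> z)"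
proof -
  let ?u = "U k \<sigma> (app r z)"
  let ?R = "length r div k"
  have uhigh: "\<And>j. ?u (?R + j) = U k \<sigma> z j" by (simp add: U_def block_app_high[OF k d])
  have lenF: "length (sigma_fin k \<sigma> r) = offs ?u ?R"
    by (simp add: sigma_fin_app[OF k d, of \<sigma> z] length_concat_offs)
  have offsh: "\<And>j. offs ?u (?R + j) = offs ?u ?R + offs (U k \<sigma> z) j"
    using offs_shift[of ?u ?R] uhigh by simp
  have ubz: "ub (U k \<sigma> z)" using goodb_ub[OF es g] .
  have ubu: "ub ?u" unfolding ub_def
  proof
    fix q obtain j where "q \<le> offs (U k \<sigma> z) j" using ubz unfolding ub_def by blast
    hence "q \<le> offs ?u (?R + j)" using offsh by simp
    thus "\<exists>j. q \<le> offs ?u j" by blast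
  qed
  have ic: "is_concat (app (sigma_fin k \<sigma> r) (S k \<sigma> z)) ?u"
    unfolding is_concat_def
  proof (intro allI impI)
    fix j i assume i: "i < length (?u j)"
    show "app (sigma_fin k \<sigma> r) (S k \<sigma> z) (offs ?u j + i) = ?u j ! i"
    proof (cases "j < ?R")
      case True
      have "offs ?u (Suc j) \<le> offs ?u ?R" using True by (intro offs_mono) simp
      hence lt: "offs ?u j + i < length (sigma_fin k \<sigma> r)" using i lenF by (simp add: offs_Suc)
      show ?thesis using lt concat_nth[where u="U k \<sigma> (app r z)", OF True i] by (simp add: app_def sigma_fin_app[OF k d, of \<sigma> z])
    next
      case False
      then obtain j' where j': "j = ?R + j'" by (metis le_add_diff_inverse not_less)
      have "S k \<sigma> z (offs (U k \<sigma> z) j' + i) = U k \<sigma> z j' ! i"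
        using cc_is_concat i uhigh j' unfolding is_concat_def S_def by metis
      thus ?thesis using j' offsh lenF uhigh by (simp add: app_def)
    qed
  qed
  show ?thesis using is_concat_unique[OF ubu _ ic] cc_is_concat by (simp add: S_def)
qed

definition Pb :: "nat \<Rightarrow> (bool list \<Rightarrow> bool list) \<Rightarrow> (nat \<Rightarrow> bool) \<Rightarrow> nat \<Rightarrow> bool list" where
  "Pb k \<sigma> x = (SOME b. (\<forall>i. length (b i) = k \<and> \<sigma> (b i) \<noteq> []) \<and> is_concat x (\<lambda>i. \<sigma> (b i)))"
definition Pw :: "nat \<Rightarrow> (bool list \<Rightarrow> bool list) \<Rightarrow> (nat \<Rightarrow> bool) \<Rightarrow> nat \<Rightarrow> bool" where
  "Pw k \<sigma> x i = Pb k \<sigma> x (i div k) ! (i mod k)"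

lemma Pb_prop: assumes "optimal k \<sigma>" shows
   "(\<forall>i. length (Pb k \<sigma> x i) = k \<and> \<sigma> (Pb k \<sigma> x i) \<noteq> []) \<and> is_concat x (\<lambda>i. \<sigma> (Pb k \<sigma> x i))"
  unfolding Pb_def
proof (rule someI_ex[where P="\<lambda>b. (\<forall>i. length (b i) = k \<and> \<sigma> (b i) \<noteq> []) \<and> is_concat x (\<lambda>i. \<sigma> (b i))"])
  show "\<exists>b. (\<forall>i. length (b i) = k \<and> \<sigma> (b i) \<noteq> []) \<and> is_concat x (\<lambda>i. \<sigma> (b i))"
    using assms unfolding optimal_def by blast
qed

lemma block_Pw: assumes "optimal k \<sigma>" "0 < k" shows "block k (Pw k \<sigma> x) j = Pb k \<sigma> x j"
proof (rule nth_equalityI)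
  show "length (block k (Pw k \<sigma> x) j) = length (Pb k \<sigma> x j)" using Pb_prop[OF assms(1)] by simp
  fix i assume "i < length (block k (Pw k \<sigma> x) j)"
  hence i: "i < k" by simp
  have "(j * k + i) div k = j" "(j * k + i) mod k = i" using i assms(2) by auto
  thus "block k (Pw k \<sigma> x) j ! i = Pb k \<sigma> x j ! i" using i by (simp add: block_nth Pw_def)
qed

lemma S_Pw: assumes "optimal k \<sigma>" "0 < k" shows "S k \<sigma> (Pw k \<sigma> x) = x"
proof -
  have u: "U k \<sigma> (Pw k \<sigma> x) = (\<lambda>i. \<sigma> (Pb k \<sigma> x i))" by (simp add: U_def block_Pw[OF assms] fun_eq_iff)
  have "ub (\<lambda>i. \<sigma> (Pb k \<sigma> x i))" unfolding ub_def
  proof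
    fix q
    have "\<forall>j. j \<le> offs (\<lambda>i. \<sigma> (Pb k \<sigma> x i)) j"
    proof
      fix j show "j \<le> offs (\<lambda>i. \<sigma> (Pb k \<sigma> x i)) j"
      proof (induction j)
        case (Suc j)
        have "length (\<sigma> (Pb k \<sigma> x j)) \<ge> 1" using Pb_prop[OF assms(1), of x] by (simp add: Suc_le_eq)
        thus ?case using Suc by (simp add: offs_Suc)
      qed simp
    qed
    thus "\<exists>j. q \<le> offs (\<lambda>i. \<sigma> (Pb k \<sigma> x i)) j" by blast
  qed
  thus ?thesis using is_concat_unique cc_is_concat Pb_prop[OF assms(1), of x] u unfolding S_def by metis
qed

lemma goodb_Pw: assumes "optimal k \<sigma>" "0 < k" "erasing_subst k \<sigma> we" shows "goodb k we (Pw k \<sigma> x)"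
  unfolding goodb_def
proof
  fix n
  have "\<sigma> (Pb k \<sigma> x n) \<noteq> []" using Pb_prop[OF assms(1)] by blast
  moreover have "\<sigma> we = []" using assms(3) by (simp add: erasing_subst_def)
  ultimately have "block k (Pw k \<sigma> x) n \<noteq> we" using block_Pw[OF assms(1,2)] by metis
  thus "\<exists>j\<ge>n. block k (Pw k \<sigma> x) j \<noteq> we" by blast
qed

lemma goodb_app: assumes "0 < k" "k dvd length r" "goodb k we z" shows "goodb k we (app r z)"
  unfolding goodb_def
proof
  fix n obtain j where "j \<ge> n" "block k z j \<noteq> we" using assms(3) unfolding goodb_def by blast
  thus "\<exists>j\<ge>n. block k (app r z) j \<noteq> we"
    using block_app_high[OF assms(1,2)] by (metis trans_le_add2)
qed


definition ep :: "(nat \<Rightarrow> bool) \<Rightarrow> bool" where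
  "ep t \<longleftrightarrow> (\<exists>N p. 0 < p \<and> (\<forall>i\<ge>N. t (i + p) = t i))"
definition infones :: "(nat \<Rightarrow> bool) \<Rightarrow> bool" where
  "infones t \<longleftrightarrow> (\<forall>n. \<exists>i\<ge>n. t i)"

lemma ep_iter: "(\<forall>i\<ge>N. t (i + p) = t i) \<Longrightarrow> (i::nat) \<ge> N \<Longrightarrow> t (i + m * p) = t i"
proof (induction m)
  case (Suc m)
  have "t (i + m * p + p) = t (i + m * p)" using Suc.prems by simp
  thus ?case using Suc by (simp add: algebra_simps)
qed simp

lemma ep_S:
  assumes k: "0 < k" and es: "erasing_subst k \<sigma> we" and g: "goodb k we t" and e: "ep t"
  shows "ep (S k \<sigma> t)"
proof -
  obtain N p where p: "0 < p" and per: "\<forall>i\<ge>N. t (i + p) = t i" using e unfolding ep_def by blast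
  let ?u = "U k \<sigma> t"
  have blk: "block k t (j + p) = block k t j" if j: "j \<ge> N" for j
  proof (rule nth_equalityI)
    show "length (block k t (j + p)) = length (block k t j)" by simp
    fix r assume "r < length (block k t (j + p))"
    hence r: "r < k" by simp
    have "j \<le> j * k" using k by simp
    hence "j * k + r \<ge> N" using j by linarith
    hence "t (j * k + r + k * p) = t (j * k + r)" using ep_iter[OF per] by simp
    thus "block k t (j + p) ! r = block k t j ! r" using r by (simp add: block_nth algebra_simps)
  qed
  hence uper: "\<And>j. j \<ge> N \<Longrightarrow> ?u (j + p) = ?u j" by (simp add: U_def)
  define Q where "Q = offs ?u (N + p) - offs ?u N"
  have offsp: "offs ?u (j + p) = offs ?u j + Q" if "j \<ge> N" for j
    using that
  proof (induction j rule: dec_induct)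
    case base thus ?case using offs_mono[of N "N+p" ?u] by (simp add: Q_def)
  next
    case (step j)
    thus ?case using uper[of j] by (simp add: offs_Suc)
  qed
  have ubu: "ub ?u" using goodb_ub[OF es g] .
  have Qpos: "0 < Q"
  proof (rule ccontr)
    assume "\<not> 0 < Q" hence Q0: "Q = 0" by simp
    have c: "offs ?u (N + m * p) = offs ?u N" for m
    proof (induction m)
      case (Suc m)
      have "offs ?u (N + m * p + p) = offs ?u (N + m * p)" using offsp[of "N + m*p"] Q0 by simp
      thus ?case using Suc by (simp add: algebra_simps)
    qed simp
    obtain j where j: "Suc (offs ?u N) \<le> offs ?u j" using ubu unfolding ub_def by blast
    have "j \<le> N + j * p" using p by (simp add: trans_le_add2)
    hence "offs ?u j \<le> offs ?u (N + j * p)" by (rule offs_mono)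
    thus False using c j by simp
  qed
  have "\<forall>x\<ge>offs ?u N. S k \<sigma> t (x + Q) = S k \<sigma> t x"
  proof (intro allI impI)
    fix x assume x: "x \<ge> offs ?u N"
    obtain M where "Suc x \<le> offs ?u M" using ubu unfolding ub_def by blast
    then obtain j i where ji: "i < length (?u j)" "x = offs ?u j + i" using cover_bounded[of x ?u M] by auto
    have jN: "j \<ge> N"
    proof (rule ccontr)
      assume "\<not> N \<le> j" hence "Suc j \<le> N" by simp
      hence "offs ?u (Suc j) \<le> offs ?u N" by (rule offs_mono)
      thus False using ji x by (simp add: offs_Suc)
    qed
    have "S k \<sigma> t x = ?u j ! i" using cc_is_concat ji unfolding is_concat_def S_def by metis
    moreover have "S k \<sigma> t (x + Q) = ?u (j + p) ! i"
    proof -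
      have "x + Q = offs ?u (j + p) + i" using offsp[OF jN] ji by simp
      moreover have "i < length (?u (j + p))" using uper[OF jN] ji by simp
      ultimately show ?thesis using cc_is_concat unfolding is_concat_def S_def by metis
    qed
    ultimately show "S k \<sigma> t (x + Q) = S k \<sigma> t x" using uper[OF jN] by simp
  qed
  thus ?thesis unfolding ep_def using Qpos by blast
qed

lemma nonep_infones: "\<not> ep t \<Longrightarrow> infones t"
proof (rule ccontr)
  assume "\<not> ep t" "\<not> infones t"
  then obtain n where "\<forall>i\<ge>n. \<not> t i" unfolding infones_def by blast
  hence "\<forall>i\<ge>n. t (i + 1) = t i" by simp
  thus False using \<open>\<not> ep t\<close> unfolding ep_def by blast
qed

lemma nonep_goodb: assumes k: "0 < k" and wl: "length we = k" and ne: "\<not> ep t" shows "goodb k we t"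
proof (rule ccontr)
  assume "\<not> goodb k we t"
  then obtain n where n: "\<forall>j\<ge>n. block k t j = we" unfolding goodb_def by blast
  have "\<forall>i\<ge>n * k. t (i + k) = t i"
  proof (intro allI impI)
    fix i assume i: "i \<ge> n * k"
    define j where "j = i div k"
    define r where "r = i mod k"
    have r: "r < k" using k by (simp add: r_def)
    have ij: "i = j * k + r" by (simp add: j_def r_def)
    have "n * k div k \<le> i div k" using i by (rule div_le_mono)
    hence jn: "j \<ge> n" using k unfolding j_def by simp
    have "t i = we ! r" using n jn block_nth[OF r, of t j] ij by metis
    moreover have "t (i + k) = we ! r"
    proof -
      have "i + k = (j + 1) * k + r" using ij by simp
      thus ?thesis using n jn block_nth[OF r, of t "j+1"] by (metis le_add1 le_trans)
    qed
    ultimately show "t (i + k) = t i" by simp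
  qed
  thus False using ne k unfolding ep_def by blast
qed

definition gw :: "nat \<Rightarrow> bool" where "gw i \<longleftrightarrow> (\<exists>j. i = 2 ^ j)"

lemma gw_nonep: "\<not> ep gw"
proof
  assume "ep gw"
  then obtain N p where p: "0 < p" and per: "\<forall>i\<ge>N. gw (i + p) = gw i" unfolding ep_def by blast
  define a where "a = N + p"
  have a1: "N \<le> (2::nat) ^ a" "p < (2::nat) ^ a" unfolding a_def
    using less_exp[of "N+p"] by linarith+
  have "gw (2 ^ a)" by (auto simp: gw_def)
  hence "gw (2 ^ a + p)" using per a1 by simp
  then obtain j where j: "2 ^ a + p = (2::nat) ^ j" by (auto simp: gw_def)
  have "(2::nat) ^ a < 2 ^ a + p" using p by simp
  hence "(2::nat) ^ a < 2 ^ j" using j by simp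
  hence "a < j" using power_strict_increasing_iff[of 2 a j] by simp
  moreover have "(2::nat) ^ j < 2 ^ Suc a" using j a1 by simp
  hence "j < Suc a" using power_strict_increasing_iff[of "2::nat" j "Suc a"] by simp
  ultimately show False by simp
qed

definition Lv :: "nat \<Rightarrow> (bool list \<Rightarrow> bool list) \<Rightarrow> bool list \<Rightarrow> (nat \<Rightarrow> bool) \<Rightarrow> nat \<Rightarrow> (nat \<Rightarrow> bool) \<Rightarrow> bool" where
  "Lv k \<sigma> we t n y \<longleftrightarrow> (S k \<sigma> ^^ n) t = y \<and> (\<forall>j<n. goodb k we ((S k \<sigma> ^^ j) t))"

lemma Lv_trans: assumes "Lv k \<sigma> we t n y" "Lv k \<sigma> we y m y'" shows "Lv k \<sigma> we t (n + m) y'"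
  unfolding Lv_def
proof
  show "(S k \<sigma> ^^ (n + m)) t = y'" using assms unfolding Lv_def by (simp add: funpow_add add.commute)
  show "\<forall>j<n + m. goodb k we ((S k \<sigma> ^^ j) t)"
  proof (intro allI impI)
    fix j assume j: "j < n + m"
    show "goodb k we ((S k \<sigma> ^^ j) t)"
    proof (cases "j < n")
      case True thus ?thesis using assms(1) unfolding Lv_def by blast
    next
      case False
      hence jj: "j = (j - n) + n" by simp
      have "(S k \<sigma> ^^ j) t = (S k \<sigma> ^^ (j - n)) ((S k \<sigma> ^^ n) t)"
        by (subst jj, simp only: funpow_add comp_apply)
      hence "(S k \<sigma> ^^ j) t = (S k \<sigma> ^^ (j - n)) y" using assms(1) unfolding Lv_def by simp
      thus ?thesis using assms(2) j False unfolding Lv_def by auto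
    qed
  qed
qed

lemma Lv_Pw: assumes "optimal k \<sigma>" "0 < k" "erasing_subst k \<sigma> we" shows "\<exists>t. Lv k \<sigma> we t N g"
proof (induction N)
  case 0 show ?case by (auto simp: Lv_def)
next
  case (Suc N)
  then obtain t where t: "Lv k \<sigma> we t N g" by blast
  have "Lv k \<sigma> we (Pw k \<sigma> t) 1 t" unfolding Lv_def
    using S_Pw[OF assms(1,2)] goodb_Pw[OF assms] by simp
  from Lv_trans[OF this t] show ?case by auto
qed

lemma Lv_nonep: assumes k: "0 < k" and es: "erasing_subst k \<sigma> we" and L: "Lv k \<sigma> we t n y" and ne: "\<not> ep y"
  shows "\<forall>j\<le>n. \<not> ep ((S k \<sigma> ^^ j) t)"
proof -
  have H: "\<not> ep ((S k \<sigma> ^^ (n - d)) t)" if "d \<le> n" for d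
    using that
  proof (induction d)
    case 0 thus ?case using L ne unfolding Lv_def by simp
  next
    case (Suc d)
    let ?j = "n - Suc d"
    have gj: "goodb k we ((S k \<sigma> ^^ ?j) t)" using L Suc.prems unfolding Lv_def by simp
    have e: "n - d = Suc ?j" using Suc.prems by simp
    have "(S k \<sigma> ^^ (n - d)) t = S k \<sigma> ((S k \<sigma> ^^ ?j) t)" by (simp only: e funpow.simps(2) comp_apply)
    moreover have "\<not> ep ((S k \<sigma> ^^ (n - d)) t)" using Suc by simp
    ultimately have "\<not> ep (S k \<sigma> ((S k \<sigma> ^^ ?j) t))" by simp
    thus ?case using ep_S[OF k es gj] by blast
  qed
  show ?thesis
  proof (intro allI impI)
    fix j assume "j \<le> n"
    hence "n - (n - j) = j" by simp
    thus "\<not> ep ((S k \<sigma> ^^ j) t)" using H[of "n - j"] by simp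
  qed
qed


primrec zch :: "nat \<Rightarrow> (bool list \<Rightarrow> bool list) \<Rightarrow> (nat \<Rightarrow> bool list) \<Rightarrow> nat \<Rightarrow> (nat \<Rightarrow> bool) \<Rightarrow> nat \<Rightarrow> (nat \<Rightarrow> bool)" where
  "zch k \<sigma> v n y 0 = Pw k \<sigma> y"
| "zch k \<sigma> v n y (Suc d) = Pw k \<sigma> (app (v (n - 1 - d)) (zch k \<sigma> v n y d))"

lemma chain:
  assumes k: "0 < k" and es: "erasing_subst k \<sigma> we" and se: "strongly_erasing k \<sigma>" and opt: "optimal k \<sigma>"
  shows "\<exists>n t. 1 \<le> n \<and> pre w t \<and> Lv k \<sigma> we t n y"
proof -
  obtain rs where rs: "rs \<noteq> []" "k_rounding k w (rs ! 0)"
    "\<forall>j. 1 \<le> j \<and> j < length rs \<longrightarrow> k_rounding k (sigma_fin k \<sigma> (rs ! (j - 1))) (rs ! j)"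
    "sigma_fin k \<sigma> (last rs) = []"
    using se unfolding strongly_erasing_def by blast
  define n where "n = length rs"
  define r where "r = (\<lambda>j. rs ! j)"
  have n1: "1 \<le> n" using rs(1) by (simp add: n_def Suc_leI)
  have dv: "k dvd length (r j)" if "j < n" for j
  proof (cases "j = 0")
    case True thus ?thesis using rs(2) by (simp add: r_def k_rounding_def)
  next
    case False thus ?thesis using rs(3) that by (simp add: r_def k_rounding_def n_def)
  qed
  obtain c where c: "r 0 = w @ c" using rs(2) by (auto simp: r_def k_rounding_def)
  define v where "v = (\<lambda>j. drop (length (sigma_fin k \<sigma> (r (j - 1)))) (r j))"
  have rv: "r j = sigma_fin k \<sigma> (r (j - 1)) @ v j" if "1 \<le> j" "j < n" for j
  proof -
    have "k_rounding k (sigma_fin k \<sigma> (rs ! (j - 1))) (rs ! j)" using rs(3) that n_def by blast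
    then obtain c' where "r j = sigma_fin k \<sigma> (r (j - 1)) @ c'"
      by (auto simp: r_def k_rounding_def)
    thus ?thesis by (simp add: v_def)
  qed
  have lastF: "sigma_fin k \<sigma> (r (n - 1)) = []" using rs(1,4) by (simp add: r_def n_def last_conv_nth)
  define Z where "Z = zch k \<sigma> v n y"
  define X where "X = (\<lambda>j. app (r j) (Z (n - 1 - j)))"
  have gZ: "goodb k we (Z d)" for d by (cases d) (simp_all add: Z_def goodb_Pw[OF opt k es])
  have gX: "goodb k we (X j)" if "j < n" for j
    unfolding X_def by (rule goodb_app[OF k dv[OF that] gZ])
  have stp: "S k \<sigma> (X j) = X (Suc j)" if "Suc j < n" for j
  proof -
    define d where "d = n - 2 - j"
    have e1: "n - 1 - j = Suc d" "n - 1 - d = Suc j" "n - 1 - Suc j = d" "n - Suc d = Suc j" "n - Suc (Suc j) = d" using that by (simp_all add: d_def)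
    have "S k \<sigma> (X j) = app (sigma_fin k \<sigma> (r j)) (S k \<sigma> (Z (Suc d)))"
      unfolding X_def e1 by (rule S_app[OF k dv es gZ]) (use that in simp)
    also have "S k \<sigma> (Z (Suc d)) = app (v (Suc j)) (Z d)"
      by (simp add: Z_def e1 S_Pw[OF opt k])
    also have "app (sigma_fin k \<sigma> (r j)) (app (v (Suc j)) (Z d)) = app (r (Suc j)) (Z d)"
      using rv[of "Suc j"] that by (simp add: app_append)
    finally show ?thesis by (simp add: X_def e1)
  qed
  have lst: "S k \<sigma> (X (n - 1)) = y"
  proof -
    have "S k \<sigma> (X (n - 1)) = app (sigma_fin k \<sigma> (r (n - 1))) (S k \<sigma> (Z 0))"
      unfolding X_def by simp (rule S_app[OF k dv es gZ], use n1 in simp)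
    thus ?thesis using lastF by (simp add: Z_def S_Pw[OF opt k])
  qed
  have it: "(S k \<sigma> ^^ j) (X 0) = X j" if "j < n" for j
    using that
  proof (induction j)
    case (Suc j) thus ?case using stp by simp
  qed simp
  have "(S k \<sigma> ^^ n) (X 0) = y"
  proof -
    have "n = Suc (n - 1)" using n1 by simp
    hence "(S k \<sigma> ^^ n) (X 0) = S k \<sigma> ((S k \<sigma> ^^ (n - 1)) (X 0))" by (metis funpow.simps(2) comp_apply)
    thus ?thesis using it[of "n - 1"] n1 lst by simp
  qed
  moreover have "\<forall>j<n. goodb k we ((S k \<sigma> ^^ j) (X 0))" using it gX by simp
  moreover have "pre w (X 0)" unfolding pre_def X_def app_def c by (simp add: nth_append)
  ultimately show ?thesis using n1 unfolding Lv_def by blast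
qed

lemma len_levels:
  assumes k: "0 < k" and es: "erasing_subst k \<sigma> we" and g: "\<forall>j<m. goodb k we ((S k \<sigma> ^^ j) t)"
  shows "\<exists>l. q \<le> length ((sigma_fin k \<sigma> ^^ m) (pf t l))"
  using g
proof (induction m arbitrary: q)
  case 0 show ?case by (rule exI[of _ q]) simp
next
  case (Suc m)
  let ?x = "(S k \<sigma> ^^ m) t"
  have "goodb k we ?x" using Suc.prems by simp
  hence "ub (U k \<sigma> ?x)" by (rule goodb_ub[OF es])
  then obtain L where L: "q \<le> offs (U k \<sigma> ?x) L" unfolding ub_def by blast
  obtain l where l: "L * k \<le> length ((sigma_fin k \<sigma> ^^ m) (pf t l))" using Suc by auto
  let ?qm = "(sigma_fin k \<sigma> ^^ m) (pf t l)"
  have qm: "?qm = pf ?x (length ?qm)" using pre_levels[OF k] pre_eq_pf by blast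
  have "L \<le> length ?qm div k" using l k by (metis div_le_mono div_mult_self_is_m)
  hence "offs (U k \<sigma> ?x) L \<le> offs (U k \<sigma> ?x) (length ?qm div k)" by (rule offs_mono)
  moreover have "length (sigma_fin k \<sigma> ?qm) = offs (U k \<sigma> ?x) (length ?qm div k)"
    by (subst qm) (simp add: length_sigma_fin_pf[OF k])
  ultimately show ?case using L by (intro exI[of _ l]) simp
qed

lemma ev_len:
  assumes k: "0 < k" and es: "erasing_subst k \<sigma> we" and g: "\<forall>j<m. goodb k we ((S k \<sigma> ^^ j) t)"
  shows "eventually (\<lambda>l. q \<le> length ((sigma_fin k \<sigma> ^^ m) (pf t l))) sequentially"
proof -
  obtain l0 where l0: "q \<le> length ((sigma_fin k \<sigma> ^^ m) (pf t l0))" using len_levels[OF k es g] by blast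
  show ?thesis unfolding eventually_sequentially
  proof (intro exI allI impI)
    fix l assume "l0 \<le> l"
    hence "prefix ((sigma_fin k \<sigma> ^^ m) (pf t l0)) ((sigma_fin k \<sigma> ^^ m) (pf t l))"
      by (intro funpow_mono_prefix pf_prefix)
    thus "q \<le> length ((sigma_fin k \<sigma> ^^ m) (pf t l))" using l0 prefix_length_le le_trans by blast
  qed
qed

lemma pre_pre_prefix: "pre a x \<Longrightarrow> pre b x \<Longrightarrow> length a \<le> length b \<Longrightarrow> prefix a b"
  using pre_eq_pf pf_prefix by metis

definition cond :: "nat \<Rightarrow> bool list \<Rightarrow> nat \<Rightarrow> bool list \<Rightarrow> bool" where
  "cond k we N q \<longleftrightarrow> (\<exists>i. N \<le> i \<and> i < length q \<and> q ! i) \<and>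
     (\<exists>j. N \<le> j \<and> Suc j * k \<le> length q \<and> take k (drop (j * k) q) \<noteq> we)"

lemma ev_cond:
  assumes k: "0 < k" and es: "erasing_subst k \<sigma> we" and g: "\<forall>j<m. goodb k we ((S k \<sigma> ^^ j) t)"
    and io: "infones ((S k \<sigma> ^^ m) t)" and gm: "goodb k we ((S k \<sigma> ^^ m) t)"
  shows "eventually (\<lambda>l. cond k we N ((sigma_fin k \<sigma> ^^ m) (pf t l))) sequentially"
proof -
  let ?x = "(S k \<sigma> ^^ m) t"
  obtain i where i: "N \<le> i" "?x i" using io unfolding infones_def by blast
  obtain j where j: "N \<le> j" "block k ?x j \<noteq> we" using gm unfolding goodb_def by blast
  have "eventually (\<lambda>l. Suc i + Suc j * k \<le> length ((sigma_fin k \<sigma> ^^ m) (pf t l))) sequentially"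
    by (rule ev_len[OF k es g])
  thus ?thesis
  proof (rule eventually_mono)
    fix l let ?q = "(sigma_fin k \<sigma> ^^ m) (pf t l)"
    assume le: "Suc i + Suc j * k \<le> length ?q"
    have q: "?q = pf ?x (length ?q)" using pre_levels[OF k] pre_eq_pf by blast
    have "?q ! i" using le i by (subst q) (simp add: pf_def)
    moreover have "take k (drop (j * k) ?q) \<noteq> we" using le j block_pf[of j k "length ?q" ?x] q by simp
    ultimately show "cond k we N ?q" unfolding cond_def using le i j by (intro conjI exI[of _ i] exI[of _ j]) auto
  qed
qed


lemma Bext:
  assumes k: "0 < k" and es: "erasing_subst k \<sigma> we" and se: "strongly_erasing k \<sigma>" and opt: "optimal k \<sigma>"
  shows "\<exists>p' h. prefix p p' \<and> 1 \<le> h \<and> prefix W ((sigma_fin k \<sigma> ^^ h) p') \<and>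
           (\<forall>m\<le>N. cond k we N ((sigma_fin k \<sigma> ^^ m) p'))"
proof -
  have wl: "length we = k" using es by (simp add: erasing_subst_def)
  obtain y0 where y0: "Lv k \<sigma> we y0 N gw" using Lv_Pw[OF opt k es] by blast
  obtain n2 y1 where y1: "pre W y1" "Lv k \<sigma> we y1 n2 y0" using chain[OF k es se opt] by blast
  obtain n1 t where t: "1 \<le> n1" "pre p t" "Lv k \<sigma> we t n1 y1" using chain[OF k es se opt] by blast
  define M where "M = n1 + (n2 + N)"
  have L: "Lv k \<sigma> we t M gw" unfolding M_def by (intro Lv_trans[OF t(3)] Lv_trans[OF y1(2) y0])
  have NE: "\<forall>j\<le>M. \<not> ep ((S k \<sigma> ^^ j) t)" by (rule Lv_nonep[OF k es L gw_nonep])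
  have G: "goodb k we ((S k \<sigma> ^^ j) t)" "infones ((S k \<sigma> ^^ j) t)" if "j \<le> M" for j
    using NE that nonep_goodb[OF k wl] nonep_infones by blast+
  have gl: "\<forall>j<m. goodb k we ((S k \<sigma> ^^ j) t)" if "m \<le> M" for m
    using G(1) that by simp
  have e1: "eventually (\<lambda>l. length p \<le> l) sequentially" by (rule eventually_ge_at_top)
  have e2: "eventually (\<lambda>l. length W \<le> length ((sigma_fin k \<sigma> ^^ n1) (pf t l))) sequentially"
    by (rule ev_len[OF k es gl]) (simp add: M_def)
  have e3: "eventually (\<lambda>l. \<forall>m\<in>{..N}. cond k we N ((sigma_fin k \<sigma> ^^ m) (pf t l))) sequentially"
  proof (rule eventually_ball_finite)
    show "finite {..N}" by simp
    show "\<forall>m\<in>{..N}. eventually (\<lambda>l. cond k we N ((sigma_fin k \<sigma> ^^ m) (pf t l))) sequentially"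
    proof
      fix m assume "m \<in> {..N}" hence mM: "m \<le> M" by (simp add: M_def)
      show "eventually (\<lambda>l. cond k we N ((sigma_fin k \<sigma> ^^ m) (pf t l))) sequentially"
        by (rule ev_cond[OF k es gl[OF mM] G(2)[OF mM] G(1)[OF mM]])
    qed
  qed
  obtain l where l: "length p \<le> l" "length W \<le> length ((sigma_fin k \<sigma> ^^ n1) (pf t l))"
    "\<forall>m\<in>{..N}. cond k we N ((sigma_fin k \<sigma> ^^ m) (pf t l))"
    using eventually_happens'[OF _ eventually_conj[OF e1 eventually_conj[OF e2 e3]]] by auto
  have "prefix p (pf t l)" using pre_pre_prefix[OF t(2) pre_pf[of t l]] l(1) by simp
  moreover have "prefix W ((sigma_fin k \<sigma> ^^ n1) (pf t l))"
  proof (rule pre_pre_prefix[OF _ pre_levels[OF k] l(2)])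
    have "(S k \<sigma> ^^ n1) t = y1" using t(3) by (simp add: Lv_def)
    thus "pre W ((S k \<sigma> ^^ n1) t)" using y1(1) by simp
  qed
  ultimately show ?thesis using t(1) l(3) by blast
qed

definition nxt where
  "nxt k \<sigma> we W N p = (SOME x. prefix p (fst x) \<and> 1 \<le> snd x \<and> prefix (W N) ((sigma_fin k \<sigma> ^^ snd x) (fst x)) \<and>
           (\<forall>m\<le>N. cond k we N ((sigma_fin k \<sigma> ^^ m) (fst x))))"

lemma nxt_prop:
  assumes k: "0 < k" and es: "erasing_subst k \<sigma> we" and se: "strongly_erasing k \<sigma>" and opt: "optimal k \<sigma>"
  shows "prefix p (fst (nxt k \<sigma> we W N p)) \<and> 1 \<le> snd (nxt k \<sigma> we W N p) \<and>
     prefix (W N) ((sigma_fin k \<sigma> ^^ snd (nxt k \<sigma> we W N p)) (fst (nxt k \<sigma> we W N p))) \<and>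
     (\<forall>m\<le>N. cond k we N ((sigma_fin k \<sigma> ^^ m) (fst (nxt k \<sigma> we W N p))))"
  unfolding nxt_def
proof (rule someI_ex[where P="\<lambda>x. prefix p (fst x) \<and> 1 \<le> snd x \<and> prefix (W N) ((sigma_fin k \<sigma> ^^ snd x) (fst x)) \<and>
           (\<forall>m\<le>N. cond k we N ((sigma_fin k \<sigma> ^^ m) (fst x)))"])
  obtain p' h where "prefix p p' \<and> 1 \<le> h \<and> prefix (W N) ((sigma_fin k \<sigma> ^^ h) p') \<and>
           (\<forall>m\<le>N. cond k we N ((sigma_fin k \<sigma> ^^ m) p'))" using Bext[OF k es se opt] by blast
  thus "\<exists>x. prefix p (fst x) \<and> 1 \<le> snd x \<and> prefix (W N) ((sigma_fin k \<sigma> ^^ snd x) (fst x)) \<and>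
           (\<forall>m\<le>N. cond k we N ((sigma_fin k \<sigma> ^^ m) (fst x)))" by (intro exI[of _ "(p', h)"]) simp
qed

primrec ps where
  "ps k \<sigma> we W 0 = W 0"
| "ps k \<sigma> we W (Suc N) = fst (nxt k \<sigma> we W (Suc N) (ps k \<sigma> we W N))"

definition hs where "hs k \<sigma> we W N = snd (nxt k \<sigma> we W N (ps k \<sigma> we W (N - 1)))"

definition lim where "lim k \<sigma> we W i = ps k \<sigma> we W (Suc i) ! i"

lemma construction:
  assumes k: "0 < k" and es: "erasing_subst k \<sigma> we" and se: "strongly_erasing k \<sigma>" and opt: "optimal k \<sigma>"
  shows "pre (W 0) (lim k \<sigma> we W)"
    and "\<And>m. goodb k we ((S k \<sigma> ^^ m) (lim k \<sigma> we W))"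
    and "\<And>m. infones ((S k \<sigma> ^^ m) (lim k \<sigma> we W))"
    and "\<And>n. 1 \<le> n \<Longrightarrow> 1 \<le> hs k \<sigma> we W n \<and> pre (W n) ((S k \<sigma> ^^ hs k \<sigma> we W n) (lim k \<sigma> we W))"
proof -
  let ?p = "ps k \<sigma> we W" and ?s = "lim k \<sigma> we W"
  have P: "prefix (?p N) (?p (Suc N)) \<and> 1 \<le> hs k \<sigma> we W (Suc N) \<and>
     prefix (W (Suc N)) ((sigma_fin k \<sigma> ^^ hs k \<sigma> we W (Suc N)) (?p (Suc N))) \<and>
     (\<forall>m\<le>Suc N. cond k we (Suc N) ((sigma_fin k \<sigma> ^^ m) (?p (Suc N))))" for N
    using nxt_prop[OF k es se opt, of "?p N" W "Suc N"] by (simp add: hs_def)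
  have mono: "prefix (?p a) (?p b)" if "a \<le> b" for a b
    using that
  proof (induction b rule: dec_induct)
    case (step b) thus ?case using P[of b] prefix_order.trans by blast
  qed simp
  have len: "N < length (?p N)" if N1: "1 \<le> N" for N
  proof -
    obtain N' where N': "N = Suc N'" using N1 by (cases N) auto
    have "cond k we N (?p N)" using P[of N'] N' by fastforce
    thus ?thesis unfolding cond_def by auto
  qed
  have preN: "pre (?p N) ?s" for N
    unfolding pre_def
  proof (intro allI impI)
    fix i assume i: "i < length (?p N)"
    show "?s i = ?p N ! i"
    proof (cases "N \<le> Suc i")
      case True
      then obtain c where "?p (Suc i) = ?p N @ c" using mono[of N "Suc i"] by (auto simp: prefix_def simp del: ps.simps)
      thus ?thesis using i unfolding lim_def by (simp add: nth_append del: ps.simps)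
    next
      case False
      then obtain c where c: "?p N = ?p (Suc i) @ c" using mono[of "Suc i" N] by (auto simp: prefix_def simp del: ps.simps)
      have "i < length (?p (Suc i))" using len[of "Suc i"] by simp
      thus ?thesis using c unfolding lim_def by (simp add: nth_append del: ps.simps)
    qed
  qed
  show "pre (W 0) ?s" using preN[of 0] by simp
  have lev: "pre ((sigma_fin k \<sigma> ^^ m) (?p N)) ((S k \<sigma> ^^ m) ?s)" for m N
    using pre_levels[OF k, where \<sigma>=\<sigma> and m=m and t="?s" and l="length (?p N)"] pre_eq_pf[OF preN[of N]] by simp
  have cnd: "cond k we N ((sigma_fin k \<sigma> ^^ m) (?p N))" if mN: "m \<le> N" "1 \<le> N" for m N
  proof -
    obtain N' where N': "N = Suc N'" using mN by (cases N) auto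
    thus ?thesis using P[of N'] mN by blast
  qed
  show "goodb k we ((S k \<sigma> ^^ m) ?s)" for m
    unfolding goodb_def
  proof
    fix B define N where "N = Suc (m + B)"
    let ?q = "(sigma_fin k \<sigma> ^^ m) (?p N)"
    obtain j where j: "N \<le> j" "Suc j * k \<le> length ?q" "take k (drop (j * k) ?q) \<noteq> we"
      using cnd[of m N] unfolding cond_def N_def by auto
    have "?q = pf ((S k \<sigma> ^^ m) ?s) (length ?q)" using lev pre_eq_pf by blast
    hence "take k (drop (j * k) ?q) = block k ((S k \<sigma> ^^ m) ?s) j" using j(2) block_pf by metis
    thus "\<exists>j\<ge>B. block k ((S k \<sigma> ^^ m) ?s) j \<noteq> we" using j N_def by (intro exI[of _ j]) auto
  qed
  show "infones ((S k \<sigma> ^^ m) ?s)" for m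
    unfolding infones_def
  proof
    fix B define N where "N = Suc (m + B)"
    let ?q = "(sigma_fin k \<sigma> ^^ m) (?p N)"
    obtain i where i: "N \<le> i" "i < length ?q" "?q ! i"
      using cnd[of m N] unfolding cond_def N_def by auto
    have "(S k \<sigma> ^^ m) ?s i" using lev[of m N] i unfolding pre_def by simp
    thus "\<exists>i\<ge>B. (S k \<sigma> ^^ m) ?s i" using i N_def by (intro exI[of _ i]) auto
  qed
  show "1 \<le> hs k \<sigma> we W n \<and> pre (W n) ((S k \<sigma> ^^ hs k \<sigma> we W n) ?s)" if n1: "1 \<le> n" for n
  proof -
    obtain N' where N': "n = Suc N'" using n1 by (cases n) auto
    have h: "1 \<le> hs k \<sigma> we W n" "prefix (W n) ((sigma_fin k \<sigma> ^^ hs k \<sigma> we W n) (?p n))"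
      using P[of N'] N' by auto
    have "pre (W n) ((S k \<sigma> ^^ hs k \<sigma> we W n) ?s)"
      using h(2) lev[of "hs k \<sigma> we W n" n] unfolding pre_def prefix_def
      by (auto simp: nth_append)
    thus ?thesis using h(1) by simp
  qed
qed


lemma dig_bound: "norm ((if b then 1 else 0) / 2 ^ (i + 1) :: real) \<le> (1/2) ^ Suc i"
  by (simp add: power_one_over)

lemma val_summable: "summable (\<lambda>i. (if t i then 1 else 0) / 2 ^ (i + 1) :: real)"
  by (rule summable_comparison_test[OF _ sums_summable[OF power_half_series]]) (use dig_bound in blast)

lemma val_nonneg: "0 \<le> val_inf t"
  unfolding val_inf_def by (rule suminf_nonneg[OF val_summable]) simp

lemma val_le1: "val_inf t \<le> 1"
proof -
  have "val_inf t \<le> (\<Sum>i. (1/2::real) ^ Suc i)"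
    unfolding val_inf_def
    by (rule suminf_le[OF _ val_summable sums_summable[OF power_half_series]])
       (use dig_bound in \<open>auto simp: power_one_over\<close>)
  thus ?thesis using sums_unique[OF power_half_series] by simp
qed

lemma val_pos: "t i \<Longrightarrow> 0 < val_inf t"
  unfolding val_inf_def by (rule suminf_pos2[OF val_summable, where i=i]) auto

lemma val_split: "val_inf t = (if t 0 then 1 else 0) / 2 + val_inf (\<lambda>i. t (Suc i)) / 2"
proof -
  have "(\<Sum>n. (if t (Suc n) then 1 else 0) / 2 ^ (Suc n + 1)) = val_inf t - (if t 0 then 1 else 0) / 2"
    unfolding val_inf_def using suminf_split_head[OF val_summable[of t]] by simp
  moreover have "(\<Sum>n. (if t (Suc n) then 1 else 0) / 2 ^ (Suc n + 1) :: real)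
      = (\<Sum>n. (if t (Suc n) then 1 else 0) / 2 ^ (n + 1)) / 2"
    using suminf_divide[OF val_summable[of "\<lambda>i. t (Suc i)"], of 2] by (simp add: mult.commute)
  ultimately show ?thesis unfolding val_inf_def by simp
qed

lemma val_uniq_aux:
  "\<And>s t. (\<forall>i<d. s i = t i) \<Longrightarrow> s d \<noteq> t d \<Longrightarrow> infones s \<Longrightarrow> infones t \<Longrightarrow> val_inf s \<noteq> val_inf t"
proof (induction d)
  case 0
  have key: "val_inf a \<noteq> val_inf b" if ab: "a 0" "\<not> b 0" "infones a" for a b
  proof -
    obtain i where "i \<ge> 1" "a i" using ab(3) unfolding infones_def by blast
    then obtain i' where "a (Suc i')" by (cases i) auto
    hence "0 < val_inf (\<lambda>i. a (Suc i))" by (rule val_pos)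
    hence "val_inf a > 1/2" using val_split[of a] ab by simp
    moreover have "val_inf b \<le> 1/2" using val_split[of b] ab val_le1[of "\<lambda>i. b (Suc i)"] by simp
    ultimately show ?thesis by simp
  qed
  show ?case
  proof (cases "s 0")
    case True thus ?thesis using key[of s t] 0 by simp
  next
    case False thus ?thesis using key[of t s] 0 by auto
  qed
next
  case (Suc d)
  have "val_inf (\<lambda>i. s (Suc i)) \<noteq> val_inf (\<lambda>i. t (Suc i))"
  proof (rule Suc.IH)
    show "\<forall>i<d. s (Suc i) = t (Suc i)" using Suc.prems(1) by simp
    show "s (Suc d) \<noteq> t (Suc d)" by fact
    show "infones (\<lambda>i. s (Suc i))" using Suc.prems(3) unfolding infones_def
      by (metis Suc_le_D Suc_le_mono le_SucI)
    show "infones (\<lambda>i. t (Suc i))" using Suc.prems(4) unfolding infones_def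
      by (metis Suc_le_D Suc_le_mono le_SucI)
  qed
  moreover have "s 0 = t 0" using Suc.prems(1) by simp
  ultimately show ?case using val_split[of s] val_split[of t] by simp
qed

lemma bexp_val: assumes "infones t" shows "bexp (val_inf t) = t"
  unfolding bexp_def
proof (rule the_equality)
  show "val_inf t = val_inf t \<and> (\<forall>n. \<exists>m\<ge>n. t m)" using assms by (simp add: infones_def)
  fix s assume s: "val_inf s = val_inf t \<and> (\<forall>n. \<exists>m\<ge>n. s m)"
  show "s = t"
  proof (rule ccontr)
    assume "s \<noteq> t"
    then obtain d where "s d \<noteq> t d" by auto
    define d0 where "d0 = (LEAST d. s d \<noteq> t d)"
    have "s d0 \<noteq> t d0" unfolding d0_def by (rule LeastI) fact
    moreover have "\<forall>i<d0. s i = t i" unfolding d0_def using not_less_Least by blast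
    ultimately show False using val_uniq_aux[of d0 s t] s assms by (simp add: infones_def)
  qed
qed

lemma val_concat_eq: assumes "ub u" shows "val_concat u = val_inf (cc u)"
proof -
  define a where "a = (\<lambda>i. (if cc u i then 1 else 0) / 2 ^ (i + 1) :: real)"
  have piece: "val_fin (u j) / 2 ^ offs u j = (\<Sum>x\<in>{offs u j..<offs u (Suc j)}. a x)" for j
  proof -
    have "val_fin (u j) / 2 ^ offs u j = (\<Sum>i<length (u j). a (i + offs u j))"
      unfolding val_fin_def sum_divide_distrib
    proof (rule sum.cong[OF refl])
      fix i assume "i \<in> {..<length (u j)}"
      hence "cc u (offs u j + i) = u j ! i" using cc_is_concat unfolding is_concat_def by simp
      thus "(if u j ! i then 1 else 0) / 2 ^ (i + 1) / 2 ^ offs u j = a (i + offs u j)"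
        by (simp add: a_def power_add add.commute)
    qed
    also have "\<dots> = (\<Sum>x\<in>{offs u j..<offs u (Suc j)}. a x)"
      using sum.shift_bounds_nat_ivl[of a 0 "offs u j" "length (u j)"]
      by (simp add: offs_Suc lessThan_atLeast0 add.commute)
    finally show ?thesis .
  qed
  have partial: "(\<Sum>j<J. val_fin (u j) / 2 ^ offs u j) = (\<Sum>x<offs u J. a x)" for J
  proof (induction J)
    case (Suc J)
    have "(\<Sum>x<offs u J. a x) + (\<Sum>x\<in>{offs u J..<offs u (Suc J)}. a x) = (\<Sum>x<offs u (Suc J). a x)"
      unfolding lessThan_atLeast0 by (rule sum.atLeastLessThan_concat) (simp_all add: offs_Suc)
    thus ?case using Suc piece by simp
  qed simp
  have fl: "filterlim (offs u) at_top sequentially"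
    unfolding filterlim_at_top eventually_sequentially
  proof
    fix Z obtain j where "Z \<le> offs u j" using assms unfolding ub_def by blast
    thus "\<exists>N. \<forall>n\<ge>N. Z \<le> offs u n" using offs_mono le_trans by blast
  qed
  have sa: "summable a" unfolding a_def by (rule val_summable)
  have "(\<lambda>J. \<Sum>x<offs u J. a x) \<longlonglongrightarrow> suminf a"
    using filterlim_compose[OF summable_LIMSEQ[OF sa] fl] by simp
  hence "(\<lambda>j. val_fin (u j) / 2 ^ offs u j) sums suminf a" unfolding sums_def partial .
  thus ?thesis unfolding val_concat_def val_inf_def a_def by (simp add: sums_unique[symmetric])
qed

lemma cyl_pre: assumes "pre w t" shows "val_inf t \<in> cyl w"
proof -
  have "t = (\<lambda>i. if i < length w then w ! i else t (i - length w + length w))"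
    using assms unfolding pre_def by (auto simp: fun_eq_iff)
  hence "\<exists>v. val_inf t = val_inf (\<lambda>i. if i < length w then w ! i else v (i - length w))"
    by (intro exI[of _ "\<lambda>i. t (i + length w)"]) metis
  thus ?thesis unfolding cyl_def using val_nonneg val_le1 by blast
qed

lemma f_step:
  assumes k: "0 < k" and es: "erasing_subst k \<sigma> we" and io: "infones t" and g: "goodb k we t"
  shows "f_sigma k \<sigma> we (val_inf t) = val_inf (S k \<sigma> t)"
proof -
  have wl: "length we = k" using es by (simp add: erasing_subst_def)
  obtain i where "t i" using io unfolding infones_def by blast
  hence pos: "0 < val_inf t" by (rule val_pos)
  obtain j where j: "block k t j \<noteq> we" using g unfolding goodb_def by blast
  have "block k (\<lambda>i. we ! (i mod k)) j = we"
  proof (rule nth_equalityI)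
    show "length (block k (\<lambda>i. we ! (i mod k)) j) = length we" using wl by simp
    fix r assume "r < length (block k (\<lambda>i. we ! (i mod k)) j)"
    hence r: "r < k" by simp
    thus "block k (\<lambda>i. we ! (i mod k)) j ! r = we ! r" by (simp add: block_nth)
  qed
  hence ne: "bexp (val_inf t) \<noteq> (\<lambda>i. we ! (i mod k))" using j bexp_val[OF io] by auto
  have "f_sigma k \<sigma> we (val_inf t) = val_concat (U k \<sigma> t)"
    unfolding f_sigma_def using pos val_le1[of t] ne bexp_val[OF io] by (simp add: U_def[abs_def])
  also have "\<dots> = val_inf (S k \<sigma> t)" unfolding S_def by (rule val_concat_eq[OF goodb_ub[OF es g]])
  finally show ?thesis .
qed


theorem corollary2:
  fixes k :: nat and \<sigma> :: "bool list \<Rightarrow> bool list" and we :: "bool list"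
    and W :: "nat \<Rightarrow> bool list"
  assumes "k \<ge> 2"
    and "erasing_subst k \<sigma> we"
    and "we \<noteq> replicate k True"
    and "strongly_erasing k \<sigma>"
    and "optimal k \<sigma>"
  shows "\<exists>x \<in> cyl (W 0). \<exists>h :: nat \<Rightarrow> nat.
           \<forall>n \<ge> 1. h n > 0 \<and> (f_sigma k \<sigma> we ^^ h n) x \<in> cyl (W n)"
proof -
  have k: "0 < k" using assms(1) by simp
  note C = construction[OF k assms(2) assms(4) assms(5), where W=W]
  let ?s = "lim k \<sigma> we W"
  have orbit: "(f_sigma k \<sigma> we ^^ m) (val_inf ?s) = val_inf ((S k \<sigma> ^^ m) ?s)" for m
  proof (induction m)
    case (Suc m)
    thus ?case using f_step[OF k assms(2) C(3)[of m] C(2)[of m]] by simp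
  qed simp
  have "val_inf ?s \<in> cyl (W 0)" by (rule cyl_pre[OF C(1)])
  moreover have "\<forall>n \<ge> 1. hs k \<sigma> we W n > 0 \<and> (f_sigma k \<sigma> we ^^ hs k \<sigma> we W n) (val_inf ?s) \<in> cyl (W n)"
    using C(4) orbit cyl_pre by (metis less_le_trans zero_less_one)
  ultimately show ?thesis by blast
qed

end
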